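(* Let $N\ge2$, $x_1>x_2>\cdots>x_N$ be real, and $\rho=\sum_{j=1}^N\rho_j\delta_{x_j}$ with $\rho_j>0$, $\sum\rho_j=1$. For $t\ge0$ let $\rho_t=e^{2tx}d\rho(x)/\int e^{2tx}d\rho(x)$, and for $1\le j\le N$ let $x_1^{(j)}(t)>\cdots>x_j^{(j)}(t)$ be the zeros of the monic orthogonal polynomial $P_j(x;\rho_t)$. Then for each $j=1,\dots,N$ and $k=1,\dots,j$, $\lim_{t\to\infty}x_k^{(j)}(t)=x_k$, and moreover $|x_k^{(j)}(t)-x_k|=O(e^{-ct})$ as $t\to\infty$, where $c=\min_{i=1,\dots,N-1}(x_i-x_{i+1})$.
   Context: $P_j(x;\rho_t)$ is the unique monic polynomial of degree $j$ orthogonal in $L^2(\rho_t)$ to all polynomials of degree less than $j$; its zeros are real and simple. *)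

theory Defs
  imports "HOL-Analysis.Analysis" "HOL-Computational_Algebra.Polynomial" "HOL-Library.Landau_Symbols"
begin

text \<open>Discrete measure rho = sum over i in 1..N of rho i times the Dirac mass at x i.
  Tilted measure rho_t has weights rho i * exp(2 t x i) / normalisation.\<close>
definition tilted_weight :: "nat \<Rightarrow> (nat \<Rightarrow> real) \<Rightarrow> (nat \<Rightarrow> real) \<Rightarrow> real \<Rightarrow> nat \<Rightarrow> real" where
  "tilted_weight N \<rho> x t i =
     \<rho> i * exp (2 * t * x i) / (\<Sum>l=1..N. \<rho> l * exp (2 * t * x l))"

definition disc_inner :: "nat \<Rightarrow> (nat \<Rightarrow> real) \<Rightarrow> (nat \<Rightarrow> real) \<Rightarrow> real poly \<Rightarrow> real poly \<Rightarrow> real" where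
  "disc_inner N w x p q = (\<Sum>i=1..N. w i * poly p (x i) * poly q (x i))"

definition is_monic_OP :: "nat \<Rightarrow> (nat \<Rightarrow> real) \<Rightarrow> (nat \<Rightarrow> real) \<Rightarrow> nat \<Rightarrow> real poly \<Rightarrow> bool" where
  "is_monic_OP N w x j p \<longleftrightarrow>
     degree p = j \<and> lead_coeff p = 1 \<and>
     (\<forall>q. degree q < j \<longrightarrow> disc_inner N w x p q = 0)"

definition monic_OP :: "nat \<Rightarrow> (nat \<Rightarrow> real) \<Rightarrow> (nat \<Rightarrow> real) \<Rightarrow> nat \<Rightarrow> real poly" where
  "monic_OP N w x j = (THE p. is_monic_OP N w x j p)"

definition kth_largest_zero :: "real poly \<Rightarrow> nat \<Rightarrow> real" where
  "kth_largest_zero p k = rev (sorted_list_of_set {z. poly p z = 0}) ! (k - 1)"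

end

theory Submission
  imports Defs
begin


lemma di_sym: "disc_inner N w x p q = disc_inner N w x q p"
  unfolding disc_inner_def by (simp add: mult_ac)

lemma di_add: "disc_inner N w x p (q1 + q2) = disc_inner N w x p q1 + disc_inner N w x p q2"
  unfolding disc_inner_def by (simp add: algebra_simps sum.distrib)

lemma di_diff: "disc_inner N w x p (q1 - q2) = disc_inner N w x p q1 - disc_inner N w x p q2"
  unfolding disc_inner_def by (simp add: algebra_simps sum_subtractf)

lemma di_smult: "disc_inner N w x p (smult a q) = a * disc_inner N w x p q"
  unfolding disc_inner_def by (simp add: algebra_simps sum_distrib_left)

lemma di_sum: "disc_inner N w x p (\<Sum>i\<in>A. f i) = (\<Sum>i\<in>A. disc_inner N w x p (f i))"
  unfolding disc_inner_def by (simp add: poly_sum sum_distrib_left sum_distrib_right algebra_simps sum.swap[of _ A])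

lemma di_zero: "disc_inner N w x p 0 = 0"
  unfolding disc_inner_def by simp

lemma di_diff_l: "disc_inner N w x (q1 - q2) p = disc_inner N w x q1 p - disc_inner N w x q2 p"
  unfolding disc_inner_def by (simp add: algebra_simps sum_subtractf)

lemma di_sum_l: "disc_inner N w x (\<Sum>i\<in>A. f i) p = (\<Sum>i\<in>A. disc_inner N w x (f i) p)"
  by (subst di_sym, simp add: di_sum, simp add: di_sym)

lemma di_smult_l: "disc_inner N w x (smult a q) p = a * disc_inner N w x q p"
  unfolding disc_inner_def by (simp add: algebra_simps sum_distrib_left)

lemma di_add_l: "disc_inner N w x (q1 + q2) p = disc_inner N w x q1 p + disc_inner N w x q2 p"
  unfolding disc_inner_def by (simp add: algebra_simps sum.distrib)

context
  fixes N :: nat and w x :: "nat \<Rightarrow> real"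
  assumes wpos: "\<forall>i\<in>{1..N}. w i > 0" and xinj: "inj_on x {1..N}"
begin

lemma term_nn: "l \<in> {1..N} \<Longrightarrow> 0 \<le> w l * poly p (x l) * poly p (x l)"
proof -
  assume l: "l \<in> {1..N}"
  have "w l > 0" using wpos l by auto
  hence "0 \<le> w l * (poly p (x l))^2" by simp
  thus ?thesis by (simp add: power2_eq_square mult.assoc)
qed

lemma di_pos:
  assumes "p \<noteq> 0" "degree p < N"
  shows "disc_inner N w x p p > 0"
proof -
  have nn: "\<forall>i\<in>{1..N}. 0 \<le> w i * poly p (x i) * poly p (x i)"
  proof
    fix i assume i: "i \<in> {1..N}"
    have "0 \<le> w i * (poly p (x i))^2" proof -
      have "w i > 0" using wpos i by auto
      thus ?thesis by simp
    qed
    thus "0 \<le> w i * poly p (x i) * poly p (x i)" by (simp add: power2_eq_square mult.assoc)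
  qed
  have ge: "disc_inner N w x p p \<ge> 0" unfolding disc_inner_def
    using nn by (intro sum_nonneg) auto
  show ?thesis
  proof (rule ccontr)
    assume "\<not> ?thesis"
    hence "disc_inner N w x p p = 0" using ge by simp
    hence "\<forall>i\<in>{1..N}. w i * poly p (x i) * poly p (x i) = 0"
      unfolding disc_inner_def using nn sum_nonneg_eq_0_iff[of "{1..N}" "\<lambda>i. w i * poly p (x i) * poly p (x i)"] by auto
    hence z: "\<forall>i\<in>{1..N}. poly p (x i) = 0" using wpos by (metis less_irrefl mult_eq_0_iff)
    have "p = 0"
      apply (rule poly_eqI_degree[of "x ` {1..N}"])
      using z assms(2) card_image[OF xinj] by auto
    thus False using assms(1) by simp
  qed
qed

lemma OP_unique:
  assumes "is_monic_OP N w x j p" "is_monic_OP N w x j q" "j \<le> N"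
  shows "p = q"
proof (rule ccontr)
  assume ne: "p \<noteq> q"
  have dp: "degree p = j" "coeff p j = 1" and dq: "degree q = j" "coeff q j = 1"
    using assms unfolding is_monic_OP_def by auto
  have "degree (p - q) \<le> j" using dp(1) dq(1) by (intro degree_diff_le) auto
  moreover have "coeff (p - q) j = 0" using dp dq by simp
  moreover have "p - q \<noteq> 0" using ne by simp
  ultimately have dl: "degree (p - q) < j"
    by (metis le_neq_implies_less leading_coeff_0_iff)
  have "disc_inner N w x (p - q) (p - q) = disc_inner N w x p (p - q) - disc_inner N w x q (p - q)"
    unfolding disc_inner_def sum_subtractf[symmetric] by (rule sum.cong) (auto simp: algebra_simps)
  also have "\<dots> = 0" using assms dl unfolding is_monic_OP_def by auto
  finally show False using di_pos[of "p - q"] ne dl assms(3) by simp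
qed

lemma OP_exists: "j \<le> N \<Longrightarrow> is_monic_OP N w x j (monic_OP N w x j)"
proof (induction j rule: less_induct)
  case (less j)
  define P where "P i = monic_OP N w x i" for i
  have IH: "\<And>i. i < j \<Longrightarrow> is_monic_OP N w x i (P i)" using less unfolding P_def by auto
  have Pdeg: "\<And>i. i < j \<Longrightarrow> degree (P i) = i" and Plc: "\<And>i. i < j \<Longrightarrow> coeff (P i) i = 1"
    using IH unfolding is_monic_OP_def by (metis, metis)
  have Pnz: "\<And>i. i < j \<Longrightarrow> P i \<noteq> 0" using Plc by fastforce
  have Ppos: "\<And>i. i < j \<Longrightarrow> disc_inner N w x (P i) (P i) > 0"
    using di_pos Pnz Pdeg less.prems by fastforce
  have Porth: "disc_inner N w x (P i) (P m) = 0" if "i < j" "m < j" "i \<noteq> m" for i m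
  proof (cases "i < m")
    case True
    then show ?thesis using IH[of m] that Pdeg[of i] unfolding is_monic_OP_def by (auto simp: di_sym)
  next
    case False
    then show ?thesis using IH[of i] that Pdeg[of m] unfolding is_monic_OP_def by auto
  qed
  define coef where "coef i = disc_inner N w x (monom 1 j) (P i) / disc_inner N w x (P i) (P i)" for i
  define p where "p = monom 1 j - (\<Sum>i<j. smult (coef i) (P i))"
  have cj: "coeff p j = 1"
    unfolding p_def using Pdeg by (simp add: coeff_sum coeff_eq_0)
  have "degree p \<le> j" unfolding p_def
    apply (intro degree_diff_le)
     apply (simp add: degree_monom_le)
    apply (intro degree_sum_le)
    using Pdeg by (auto intro: order.trans[OF degree_smult_le])
  hence dp: "degree p = j" using cj by (metis le_antisym le_degree zero_neq_one)
  have orthP: "disc_inner N w x p (P m) = 0" if m: "m < j" for m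
  proof -
    have "disc_inner N w x p (P m) = disc_inner N w x (monom 1 j) (P m)
         - (\<Sum>i<j. coef i * disc_inner N w x (P i) (P m))"
      unfolding p_def by (simp add: di_diff_l di_sum_l di_smult_l)
    also have "(\<Sum>i<j. coef i * disc_inner N w x (P i) (P m)) = coef m * disc_inner N w x (P m) (P m)"
    proof -
      have "(\<Sum>i<j. coef i * disc_inner N w x (P i) (P m)) = coef m * disc_inner N w x (P m) (P m)
          + (\<Sum>i\<in>{..<j} - {m}. coef i * disc_inner N w x (P i) (P m))"
        using m by (simp add: sum.remove)
      also have "(\<Sum>i\<in>{..<j} - {m}. coef i * disc_inner N w x (P i) (P m)) = 0"
        using m Porth by (intro sum.neutral) auto
      finally show ?thesis by simp
    qed
    also have "coef m * disc_inner N w x (P m) (P m) = disc_inner N w x (monom 1 j) (P m)"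
      unfolding coef_def using Ppos[OF m] by simp
    finally show ?thesis by simp
  qed
  have orth: "\<forall>q. degree q = n \<longrightarrow> n < j \<longrightarrow> disc_inner N w x p q = 0" for n
  proof (induction n rule: less_induct)
    case (less n)
    show ?case
    proof (intro allI impI)
      fix q :: "real poly" assume q: "degree q = n" "n < j"
      define r where "r = q - smult (coeff q n) (P n)"
      have "degree r \<le> n" unfolding r_def using q Pdeg[of n]
        by (intro degree_diff_le) (auto intro: order.trans[OF degree_smult_le])
      moreover have "coeff r n = 0" unfolding r_def using Plc[of n] q by simp
      ultimately have "r = 0 \<or> degree r < n"
        by (metis le_neq_implies_less leading_coeff_0_iff)
      hence r0: "disc_inner N w x p r = 0"
        using less.IH q by (auto simp: di_zero)
      have "q = smult (coeff q n) (P n) + r" unfolding r_def by simp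
      hence "disc_inner N w x p q = coeff q n * disc_inner N w x p (P n) + disc_inner N w x p r"
        by (metis di_add di_smult)
      thus "disc_inner N w x p q = 0" using r0 orthP q by simp
    qed
  qed
  have mp: "is_monic_OP N w x j p" unfolding is_monic_OP_def using dp cj orth by auto
  have "\<exists>!p. is_monic_OP N w x j p" using mp OP_unique less.prems by blast
  thus ?case unfolding monic_OP_def by (rule theI')
qed

lemma OP_val_bound:
  assumes j: "1 \<le> j" "j \<le> N" and i: "i \<in> {1..j}"
  shows "w i * (poly (monic_OP N w x j) (x i))^2
     \<le> (\<Sum>l\<in>{Suc j..N}. w l * (poly (\<Prod>m\<in>{1..j}. [:-x m, 1:]) (x l))^2)"
proof -
  define Q where "Q = (\<Prod>m\<in>{1..j}. [:-x m, 1:])"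
  define P where "P = monic_OP N w x j"
  have mP: "is_monic_OP N w x j P" unfolding P_def using OP_exists j by auto
  have dQ: "degree Q = j" unfolding Q_def by (subst degree_prod_eq_sum_degree) auto
  have lQ: "lead_coeff Q = 1" unfolding Q_def by (simp add: lead_coeff_prod)
  define R where "R = P - Q"
  have "degree R \<le> j" unfolding R_def using mP dQ unfolding is_monic_OP_def
    by (intro degree_diff_le) auto
  moreover have "coeff R j = 0" unfolding R_def using mP dQ lQ unfolding is_monic_OP_def by (metis coeff_diff diff_self)
  ultimately have "R = 0 \<or> degree R < j"
    by (metis le_neq_implies_less leading_coeff_0_iff)
  hence PR: "disc_inner N w x P R = 0" using mP unfolding is_monic_OP_def by (auto simp: di_zero)
  have nnR: "disc_inner N w x R R \<ge> 0" unfolding disc_inner_def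
    using term_nn by (intro sum_nonneg) auto
  have "disc_inner N w x Q Q = disc_inner N w x P P - 2 * disc_inner N w x P R + disc_inner N w x R R"
  proof -
    have "disc_inner N w x Q Q = (\<Sum>i=1..N. w i * poly P (x i) * poly P (x i)
       - 2 * (w i * poly P (x i) * poly R (x i)) + w i * poly R (x i) * poly R (x i))"
      unfolding disc_inner_def R_def by (rule sum.cong) (auto simp: algebra_simps)
    also have "\<dots> = disc_inner N w x P P - 2 * disc_inner N w x P R + disc_inner N w x R R"
      unfolding disc_inner_def by (simp add: sum.distrib sum_subtractf sum_distrib_left)
    finally show ?thesis .
  qed
  hence PQ: "disc_inner N w x P P \<le> disc_inner N w x Q Q" using PR nnR by simp
  have terms: "\<forall>l\<in>{1..N}. 0 \<le> w l * poly P (x l) * poly P (x l)"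
    using term_nn by auto
  have "w i * (poly P (x i))^2 \<le> disc_inner N w x P P"
    unfolding disc_inner_def
    using member_le_sum[of i "{1..N}" "\<lambda>l. w l * poly P (x l) * poly P (x l)"] terms i j
    by (simp add: power2_eq_square mult.assoc)
  also note PQ
  also have "disc_inner N w x Q Q = (\<Sum>l\<in>{1..j}. w l * poly Q (x l) * poly Q (x l))
        + (\<Sum>l\<in>{Suc j..N}. w l * poly Q (x l) * poly Q (x l))"
    unfolding disc_inner_def using j by (subst sum.union_disjoint[symmetric]) (auto intro!: sum.cong)
  also have "(\<Sum>l\<in>{1..j}. w l * poly Q (x l) * poly Q (x l)) = 0"
    unfolding Q_def by (intro sum.neutral) (auto simp: poly_prod)
  finally show ?thesis unfolding P_def Q_def by (simp add: power2_eq_square mult.assoc)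
qed

end


lemma sign_lemma:
  fixes a b d r1 r2 m :: real
  assumes "a * b > 0" "\<bar>a\<bar> \<ge> m" "\<bar>b\<bar> \<ge> m" "d > 0" "\<bar>r1\<bar> < d * m" "\<bar>r2\<bar> < d * m"
  shows "(d * a + r1) * (- (d * b) + r2) < 0"
proof (cases "a > 0")
  case True
  hence b: "b > 0" using assms(1) by (simp add: zero_less_mult_iff)
  have "d * a \<ge> d * m" using assms True by (intro mult_left_mono) auto
  moreover have "d * b \<ge> d * m" using assms b by (intro mult_left_mono) auto
  ultimately have "d * a + r1 > 0" "- (d * b) + r2 < 0" using assms(5,6) by linarith+
  thus ?thesis by (simp add: mult_pos_neg)
next
  case False
  hence a: "a < 0" using assms(1) by (cases "a = 0") auto
  hence b: "b < 0" using assms(1) by (simp add: zero_less_mult_iff)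
  have "d * (-a) \<ge> d * m" using assms a by (intro mult_left_mono) auto
  moreover have "d * (-b) \<ge> d * m" using assms b by (intro mult_left_mono) auto
  ultimately have "d * a + r1 < 0" "- (d * b) + r2 > 0" using assms(5,6) by linarith+
  thus ?thesis by (simp add: mult_neg_pos)
qed

lemma rev_sorted_nth:
  fixes y :: "nat \<Rightarrow> real"
  assumes dec: "\<And>a b. 1 \<le> a \<Longrightarrow> a < b \<Longrightarrow> b \<le> j \<Longrightarrow> y b < y a" and k: "1 \<le> k" "k \<le> j"
  shows "rev (sorted_list_of_set (y ` {1..j})) ! (k - 1) = y k"
proof -
  define L where "L = map (\<lambda>i. y (j - i)) [0..<j]"
  have sL: "sorted_wrt (<) L" unfolding L_def sorted_wrt_map
    unfolding sorted_wrt_iff_nth_less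
  proof (intro allI impI)
    fix a b assume ab: "a < b" "b < length [0..<j]"
    thus "y (j - [0..<j] ! a) < y (j - [0..<j] ! b)" by (intro dec) auto
  qed
  have setL: "set L = y ` {1..j}"
  proof
    show "set L \<subseteq> y ` {1..j}" unfolding L_def by auto
    show "y ` {1..j} \<subseteq> set L"
    proof
      fix z assume "z \<in> y ` {1..j}"
      then obtain i where i: "i \<in> {1..j}" "z = y i" by auto
      hence "z = y (j - (j - i))" "j - i \<in> {0..<j}" by auto
      thus "z \<in> set L" unfolding L_def by force
    qed
  qed
  have "sorted_list_of_set (y ` {1..j}) = L"
    by (rule strict_sorted_equal) (use sL setL in auto)
  moreover have "rev L ! (k - 1) = L ! (j - k)" using k by (simp add: rev_nth L_def)
  moreover have "L ! (j - k) = y k" using k by (simp add: L_def)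
  ultimately show ?thesis by simp
qed

definition lag :: "(nat \<Rightarrow> real) \<Rightarrow> nat \<Rightarrow> nat \<Rightarrow> real poly" where
  "lag x j i = (\<Prod>m\<in>{1..j}-{i}. smult (1 / (x i - x m)) [:-x m, 1:])"

lemma lag_val:
  assumes inj: "inj_on x {1..j}" and i: "i \<in> {1..j}" and l: "l \<in> {1..j}"
  shows "poly (lag x j i) (x l) = (if l = i then 1 else 0)"
proof (cases "l = i")
  case True
  have "poly (lag x j i) (x l) = (\<Prod>m\<in>{1..j}-{i}. 1)"
    unfolding lag_def poly_prod
  proof (intro prod.cong refl)
    fix m assume m: "m \<in> {1..j}-{i}"
    hence "x m \<noteq> x i" using inj i by (metis DiffD1 DiffD2 inj_on_contraD singletonI)
    thus "poly (smult (1 / (x i - x m)) [:- x m, 1:]) (x l) = 1" using True by (simp add: diff_divide_distrib[symmetric])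
  qed
  thus ?thesis using True by simp
next
  case False
  have "poly (lag x j i) (x l) = 0"
    unfolding lag_def poly_prod
    by (rule prod_zero) (use False l in \<open>auto intro!: bexI[of _ l]\<close>)
  thus ?thesis using False by simp
qed

lemma lag_deg:
  assumes "i \<in> {1..j}"
  shows "degree (lag x j i) < j"
proof -
  have "degree (lag x j i) \<le> (\<Sum>m\<in>{1..j}-{i}. (degree \<circ> (\<lambda>m. smult (1 / (x i - x m)) [:-x m, 1:])) m)"
    unfolding lag_def by (rule degree_prod_sum_le) auto
  also have "\<dots> \<le> (\<Sum>m\<in>{1..j}-{i}. 1)"
    by (intro sum_mono) (auto intro: order.trans[OF degree_smult_le])
  also have "\<dots> = j - 1" using assms by simp
  finally show ?thesis using assms by auto
qed

lemma lagrange: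
  fixes R :: "real poly"
  assumes inj: "inj_on x {1..j}" and dR: "degree R < j"
  shows "poly R z = (\<Sum>i\<in>{1..j}. poly R (x i) * poly (lag x j i) z)"
proof -
  define S where "S = (\<Sum>i\<in>{1..j}. smult (poly R (x i)) (lag x j i))"
  have "degree S \<le> j - 1" unfolding S_def
  proof (intro degree_sum_le)
    fix i assume i: "i \<in> {1..j}"
    have "degree (smult (poly R (x i)) (lag x j i)) \<le> degree (lag x j i)" by (rule degree_smult_le)
    also have "\<dots> < j" using lag_deg[OF i] .
    finally show "degree (smult (poly R (x i)) (lag x j i)) \<le> j - 1" by linarith
  qed simp
  moreover have "j \<ge> 1" using dR by simp
  ultimately have dS: "degree S < j" by linarith
  have vals: "poly R (x l) = poly S (x l)" if l: "l \<in> {1..j}" for l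
  proof -
    have "poly S (x l) = (\<Sum>i\<in>{1..j}. poly R (x i) * (if l = i then 1 else 0))"
      unfolding S_def poly_sum using lag_val[OF inj _ l] by (intro sum.cong) auto
    also have "\<dots> = poly R (x l)" using l by (simp add: if_distrib cong: if_cong)
    finally show ?thesis by simp
  qed
  have "R = S"
    by (rule poly_eqI_degree[of "x ` {1..j}"]) (use vals dR dS card_image[OF inj] in auto)
  hence "poly R z = poly S z" by simp
  thus ?thesis unfolding S_def poly_sum by simp
qed



theorem theorem2p2:
  fixes N :: nat and x \<rho> :: "nat \<Rightarrow> real"
  assumes "N \<ge> 2"
    and "\<forall>i\<in>{1..<N}. x (Suc i) < x i"
    and "\<forall>i\<in>{1..N}. \<rho> i > 0"
    and "(\<Sum>i=1..N. \<rho> i) = 1"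
  defines "c \<equiv> Min ((\<lambda>i. x i - x (Suc i)) ` {1..<N})"
  shows "\<forall>j\<in>{1..N}. \<forall>k\<in>{1..j}.
     ((\<lambda>t. kth_largest_zero (monic_OP N (tilted_weight N \<rho> x t) x j) k) \<longlongrightarrow> x k) at_top
     \<and> (\<lambda>t. \<bar>kth_largest_zero (monic_OP N (tilted_weight N \<rho> x t) x j) k - x k\<bar>)
         \<in> O[at_top](\<lambda>t. exp (- c * t))"
proof -
  have fin: "finite ((\<lambda>i. x i - x (Suc i)) ` {1..<N})" by simp
  have ne: "(\<lambda>i. x i - x (Suc i)) ` {1..<N} \<noteq> {}" using assms(1) by auto
  have cle: "c \<le> x a - x (Suc a)" if "a \<in> {1..<N}" for a
    unfolding c_def using that by (intro Min_le) auto
  have cpos: "c > 0" unfolding c_def using assms(2) fin ne by (subst Min_gr_iff) auto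
  have xmono: "x b \<le> x a" if "a \<le> b" "b \<le> N" "1 \<le> a" for a b
    using that
  proof (induction b)
    case 0 then show ?case by simp
  next
    case (Suc b)
    show ?case
    proof (cases "a = Suc b")
      case True then show ?thesis by simp
    next
      case False
      hence "a \<le> b" using Suc.prems by simp
      hence "x b \<le> x a" using Suc by simp
      moreover have "x (Suc b) < x b" using assms(2) Suc.prems \<open>a \<le> b\<close> by auto
      ultimately show ?thesis by simp
    qed
  qed
  have sep: "c \<le> x a - x b" if "1 \<le> a" "a < b" "b \<le> N" for a b
  proof -
    have "x b \<le> x (Suc a)" using xmono[of "Suc a" b] that by simp
    moreover have "c \<le> x a - x (Suc a)" using cle[of a] that by simp
    ultimately show ?thesis by simp
  qed
  have xinj: "inj_on x {1..N}"
  proof (rule inj_onI)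
    fix a b assume ab: "a \<in> {1..N}" "b \<in> {1..N}" "x a = x b"
    show "a = b"
    proof (rule ccontr)
      assume "a \<noteq> b"
      hence "a < b \<or> b < a" by auto
      thus False using sep[of a b] sep[of b a] ab cpos by auto
    qed
  qed
  show ?thesis
  proof (intro ballI)
    fix j k assume j: "j \<in> {1..N}" and k: "k \<in> {1..j}"
    define W where "W t = tilted_weight N \<rho> x t" for t
    define Z where "Z t = (\<Sum>l=1..N. \<rho> l * exp (2 * t * x l))" for t
    have Zpos: "Z t > 0" for t
      unfolding Z_def using assms(1,3) by (intro sum_pos) auto
    have Wdef: "W t i = \<rho> i * exp (2 * t * x i) / Z t" for t i
      by (simp add: W_def Z_def tilted_weight_def)
    have Wpos: "\<forall>i\<in>{1..N}. W t i > 0" for t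
      using assms(3) Zpos by (auto simp: Wdef)
    define P where "P t = monic_OP N (W t) x j" for t
    have mP: "is_monic_OP N (W t) x j (P t)" for t
      unfolding P_def using OP_exists[OF Wpos xinj] j by auto
    define Q where "Q = (\<Prod>m\<in>{1..j}. [:-x m, 1:])"
    have Qx: "poly Q (x i) = 0" if "i \<in> {1..j}" for i
      unfolding Q_def poly_prod using that by (intro prod_zero) (auto intro!: bexI[of _ i])
    have dQ: "degree Q = j" unfolding Q_def by (subst degree_prod_eq_sum_degree) auto
    have lQ: "lead_coeff Q = 1" unfolding Q_def by (simp add: lead_coeff_prod)
    define M where "M i = (\<Sum>l\<in>{Suc j..N}. \<rho> l * (poly Q (x l))^2) / \<rho> i" for i
    define s where "s i = sqrt (M i)" for i
    define E where "E t = exp (- c * t)" for t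
    have Epos: "E t > 0" for t unfolding E_def by simp
    have valb: "\<bar>poly (P t) (x i)\<bar> \<le> s i * E t" if t: "t \<ge> 0" and i: "i \<in> {1..j}" for t i
    proof -
      define v where "v = poly (P t) (x i)"
      define ei where "ei = exp (2 * t * x i)"
      have A: "W t i * v^2 \<le> (\<Sum>l\<in>{Suc j..N}. W t l * (poly Q (x l))^2)"
        using OP_val_bound[OF Wpos xinj, of j i] j i unfolding P_def Q_def v_def by auto
      have ex: "exp (2*t*x l) \<le> ei * (E t)^2" if l: "l \<in> {Suc j..N}" for l
      proof -
        have "c \<le> x i - x l" using sep[of i l] i l j by auto
        hence "t * c \<le> t * (x i - x l)" using t by (rule mult_left_mono)
        hence "2*t*x l \<le> 2*t*x i + (-c*t) + (-c*t)" by (simp add: algebra_simps)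
        hence "exp (2*t*x l) \<le> exp (2*t*x i + (-c*t) + (-c*t))" by simp
        also have "\<dots> = ei * (E t)^2" unfolding ei_def E_def power2_eq_square by (simp only: exp_add mult.assoc)
        finally show ?thesis .
      qed
      have B: "(\<Sum>l\<in>{Suc j..N}. W t l * (poly Q (x l))^2)
          \<le> (\<Sum>l\<in>{Suc j..N}. \<rho> l * (ei * (E t)^2) * (poly Q (x l))^2) / Z t"
        unfolding sum_divide_distrib
      proof (rule sum_mono)
        fix l assume l: "l \<in> {Suc j..N}"
        have "\<rho> l * exp (2*t*x l) * (poly Q (x l))^2 \<le> \<rho> l * (ei * (E t)^2) * (poly Q (x l))^2"
        proof -
          have "\<rho> l > 0" using assms(3) l j by auto
          thus ?thesis using ex[OF l] by (intro mult_right_mono mult_left_mono) auto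
        qed
        hence "\<rho> l * exp (2*t*x l) * (poly Q (x l))^2 / Z t \<le> \<rho> l * (ei * (E t)^2) * (poly Q (x l))^2 / Z t"
          using Zpos[of t] by (intro divide_right_mono) auto
        thus "W t l * (poly Q (x l))^2 \<le> \<rho> l * (ei * (E t)^2) * (poly Q (x l))^2 / Z t"
          unfolding Wdef by simp
      qed
      have rhoi: "\<rho> i > 0" using assms(3) i j by auto
      have C: "(\<Sum>l\<in>{Suc j..N}. \<rho> l * (ei * (E t)^2) * (poly Q (x l))^2) = \<rho> i * ei * ((E t)^2 * M i)"
      proof -
        have rM: "\<rho> i * M i = (\<Sum>l\<in>{Suc j..N}. \<rho> l * (poly Q (x l))^2)" unfolding M_def using rhoi by simp
        have "\<rho> i * ei * ((E t)^2 * M i) = ei * (E t)^2 * (\<rho> i * M i)" by (simp add: mult_ac)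
        also have "\<dots> = (\<Sum>l\<in>{Suc j..N}. \<rho> l * (ei * (E t)^2) * (poly Q (x l))^2)"
          unfolding rM sum_distrib_left by (simp add: mult_ac)
        finally show ?thesis by simp
      qed
      have "\<rho> i * ei * v^2 / Z t \<le> \<rho> i * ei * ((E t)^2 * M i) / Z t"
        using A B C unfolding Wdef ei_def by simp
      hence "\<rho> i * ei * v^2 \<le> \<rho> i * ei * ((E t)^2 * M i)"
        using Zpos[of t] by (simp add: divide_le_cancel)
      moreover have "\<rho> i * ei > 0" unfolding ei_def using rhoi by simp
      ultimately have vb: "v^2 \<le> (E t)^2 * M i" by (simp add: mult_le_cancel_left_pos)
      have Mnn: "M i \<ge> 0" unfolding M_def using rhoi assms(3) j
      proof (intro divide_nonneg_pos sum_nonneg)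
        fix l assume "l \<in> {Suc j..N}"
        hence "\<rho> l > 0" using assms(3) j by auto
        thus "0 \<le> \<rho> l * (poly Q (x l))^2" by simp
      qed (rule rhoi)
      have "(s i * E t)^2 = (E t)^2 * M i" unfolding s_def using Mnn by (simp add: power_mult_distrib)
      hence "\<bar>v\<bar> \<le> \<bar>s i * E t\<bar>" using vb abs_le_square_iff by metis
      thus ?thesis unfolding v_def s_def using Epos[of t] Mnn by (simp add: abs_mult)
    qed
    have dR: "degree (P t - Q) < j" for t
    proof -
      have "degree (P t - Q) \<le> j" using mP[of t] dQ unfolding is_monic_OP_def
        by (intro degree_diff_le) auto
      moreover have "coeff (P t - Q) j = 0" using mP[of t] dQ lQ unfolding is_monic_OP_def
        by (metis coeff_diff diff_self)
      ultimately have "P t - Q = 0 \<or> degree (P t - Q) < j"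
        by (metis le_neq_implies_less leading_coeff_0_iff)
      thus ?thesis using j by auto
    qed
    have xinjj: "inj_on x {1..j}" using xinj j by (auto intro: inj_on_subset)
    have lagR: "poly (P t) z - poly Q z = (\<Sum>i\<in>{1..j}. poly (P t) (x i) * poly (lag x j i) z)" for t z
    proof -
      have "poly (P t) z - poly Q z = poly (P t - Q) z" by simp
      also have "\<dots> = (\<Sum>i\<in>{1..j}. poly (P t - Q) (x i) * poly (lag x j i) z)"
        by (rule lagrange[OF xinjj dR])
      also have "\<dots> = (\<Sum>i\<in>{1..j}. poly (P t) (x i) * poly (lag x j i) z)"
        using Qx by (intro sum.cong) auto
      finally show ?thesis .
    qed
    define g where "g z = (\<Sum>i\<in>{1..j}. s i * \<bar>poly (lag x j i) z\<bar>)" for z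
    define S where "S = {x N - c .. x 1 + c}"
    have "continuous_on S g" unfolding g_def by (intro continuous_intros)
    moreover have "compact S" "S \<noteq> {}" unfolding S_def using xmono[of 1 N] assms(1) cpos by auto
    ultimately obtain z0 where "z0 \<in> S" "\<forall>z\<in>S. g z \<le> g z0"
      using continuous_attains_sup by metis
    then obtain G where G: "\<forall>z\<in>S. g z \<le> G" "G \<ge> 0"
      by (metis max.cobounded1 max.cobounded2 order_trans)
    have Rb: "\<bar>poly (P t) z - poly Q z\<bar> \<le> G * E t" if t: "t \<ge> 0" and z: "z \<in> S" for t z
    proof -
      have "\<bar>poly (P t) z - poly Q z\<bar> \<le> (\<Sum>i\<in>{1..j}. \<bar>poly (P t) (x i) * poly (lag x j i) z\<bar>)"
        unfolding lagR by (rule sum_abs)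
      also have "\<dots> \<le> (\<Sum>i\<in>{1..j}. (s i * E t) * \<bar>poly (lag x j i) z\<bar>)"
        unfolding abs_mult using valb t by (intro sum_mono mult_right_mono) auto
      also have "\<dots> = E t * g z" unfolding g_def by (simp add: sum_distrib_left mult_ac)
      also have "\<dots> \<le> E t * G" using G z Epos[of t] by (intro mult_left_mono) auto
      finally show ?thesis by (simp add: mult.commute)
    qed
    define mm where "mm = (c / 2) ^ (j - 1)"
    have mmpos: "mm > 0" unfolding mm_def using cpos by simp
    define Qk where "Qk kk = (\<Prod>m\<in>{1..j}-{kk}. [:-x m, 1:])" for kk
    have Qsplit: "poly Q z = (z - x kk) * poly (Qk kk) z" if "kk \<in> {1..j}" for kk z
      unfolding Q_def Qk_def poly_prod using that by (subst prod.remove[of _ kk]) auto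
    have Qkprod: "poly (Qk kk) z1 * poly (Qk kk) z2 \<ge> mm^2"
      if kk: "kk \<in> {1..j}" and z1: "\<bar>z1 - x kk\<bar> \<le> c/2" and z2: "\<bar>z2 - x kk\<bar> \<le> c/2" for kk z1 z2
    proof -
      have fac: "(c/2)*(c/2) \<le> (z1 - x m) * (z2 - x m)" if m: "m \<in> {1..j}-{kk}" for m
      proof (cases "m < kk")
        case True
        have "c \<le> x m - x kk" using sep[of m kk] True m kk j by auto
        hence "c/2 \<le> x m - z1" "c/2 \<le> x m - z2" using abs_le_D1[OF z1] abs_le_D1[OF z2] abs_le_D2[OF z1] abs_le_D2[OF z2] by linarith+
        hence "(c/2)*(c/2) \<le> (x m - z1) * (x m - z2)" using cpos by (intro mult_mono) auto
        thus ?thesis by (simp add: algebra_simps)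
      next
        case False
        hence "kk < m" using m by auto
        hence "c \<le> x kk - x m" using sep[of kk m] m kk j by auto
        hence "c/2 \<le> z1 - x m" "c/2 \<le> z2 - x m" using abs_le_D1[OF z1] abs_le_D1[OF z2] abs_le_D2[OF z1] abs_le_D2[OF z2] by linarith+
        thus ?thesis using cpos by (intro mult_mono) auto
      qed
      have "poly (Qk kk) z1 * poly (Qk kk) z2 = (\<Prod>m\<in>{1..j}-{kk}. (z1 - x m) * (z2 - x m))"
        unfolding Qk_def poly_prod prod.distrib[symmetric] by (intro prod.cong) auto
      also have "\<dots> \<ge> (\<Prod>m\<in>{1..j}-{kk}. (c/2)*(c/2))"
        using fac cpos by (intro prod_mono) auto
      moreover have "(\<Prod>m\<in>{1..j}-{kk}. (c/2)*(c/2)) = ((c/2)*(c/2))^(j-1)"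
        using kk by simp
      moreover have "mm^2 = ((c/2)*(c/2))^(j-1)"
        unfolding mm_def power2_eq_square by (rule power_mult_distrib[symmetric])
      ultimately show ?thesis by simp
    qed
    define D where "D = G / mm + 1"
    have Dpos: "D > 0" unfolding D_def using G mmpos by (simp add: add_nonneg_pos)
    have E0: "(E \<longlongrightarrow> 0) at_top"
    proof -
      have "filterlim (\<lambda>t::real. -c * t) at_bot at_top"
        using filterlim_tendsto_neg_mult_at_bot[OF tendsto_const[of "-c"], of "\<lambda>t. t" at_top] cpos
        by (simp add: filterlim_ident)
      thus ?thesis unfolding E_def by (rule filterlim_compose[OF exp_at_bot])
    qed
    have DE0: "((\<lambda>t. D * E t) \<longlongrightarrow> 0) at_top" using tendsto_mult_right_zero[OF E0] by simp
    have ev: "eventually (\<lambda>t. t \<ge> 0 \<and> D * E t < c/2) at_top"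
      by (intro eventually_conj eventually_ge_at_top order_tendstoD(2)[OF DE0]) (use cpos in simp)
    have evb: "eventually (\<lambda>t. \<bar>kth_largest_zero (P t) k - x k\<bar> \<le> D * E t) at_top"
      using ev
    proof (rule eventually_mono)
      fix t assume t: "t \<ge> 0 \<and> D * E t < c/2"
      define \<delta> where "\<delta> = D * E t"
      have dpos: "\<delta> > 0" unfolding \<delta>_def using Dpos Epos[of t] by simp
      have dsm: "\<delta> < c/2" using t unfolding \<delta>_def by simp
      have dmm: "\<delta> * mm = G * E t + mm * E t" unfolding \<delta>_def D_def using mmpos
        by (simp add: field_simps)
      have rex: "\<exists>y. x kk - \<delta> < y \<and> y < x kk + \<delta> \<and> poly (P t) y = 0" if kk: "kk \<in> {1..j}" for kk
      proof -
        have in1: "\<bar>x kk + \<delta> - x kk\<bar> \<le> c/2" "\<bar>x kk - \<delta> - x kk\<bar> \<le> c/2"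
          using dpos dsm by auto
        define a where "a = poly (Qk kk) (x kk + \<delta>)"
        define b where "b = poly (Qk kk) (x kk - \<delta>)"
        have ab: "a * b \<ge> mm^2" using Qkprod[OF kk in1] unfolding a_def b_def .
        have aa: "a * a \<ge> mm^2" using Qkprod[OF kk in1(1) in1(1)] unfolding a_def .
        have bb: "b * b \<ge> mm^2" using Qkprod[OF kk in1(2) in1(2)] unfolding b_def .
        have absa: "\<bar>a\<bar> \<ge> mm" using aa mmpos abs_le_square_iff[of mm a] by (simp add: power2_eq_square)
        have absb: "\<bar>b\<bar> \<ge> mm" using bb mmpos abs_le_square_iff[of mm b] by (simp add: power2_eq_square)
        have abpos: "a * b > 0" using ab mmpos by (smt (verit) zero_less_power)
        have xr: "x N \<le> x kk" "x kk \<le> x 1" using xmono[of kk N] xmono[of 1 kk] kk j by auto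
        have Sin: "x kk + \<delta> \<in> S" "x kk - \<delta> \<in> S" unfolding S_def using xr dpos dsm by auto
        define r1 where "r1 = poly (P t) (x kk + \<delta>) - poly Q (x kk + \<delta>)"
        define r2 where "r2 = poly (P t) (x kk - \<delta>) - poly Q (x kk - \<delta>)"
        have "mm * E t > 0" using mmpos Epos[of t] by simp
        hence r1b: "\<bar>r1\<bar> < \<delta> * mm" and r2b: "\<bar>r2\<bar> < \<delta> * mm"
          using Rb[of t, OF _ Sin(1)] Rb[of t, OF _ Sin(2)] t dmm unfolding r1_def r2_def by auto
        have p1: "poly (P t) (x kk + \<delta>) = \<delta> * a + r1"
          unfolding r1_def a_def using Qsplit[OF kk, of "x kk + \<delta>"] by simp
        have p2: "poly (P t) (x kk - \<delta>) = - (\<delta> * b) + r2"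
          unfolding r2_def b_def using Qsplit[OF kk, of "x kk - \<delta>"] by simp
        have "poly (P t) (x kk - \<delta>) * poly (P t) (x kk + \<delta>) < 0"
          unfolding p1 p2 using sign_lemma[OF abpos absa absb dpos r1b r2b] by (simp add: mult.commute)
        from poly_IVT[OF _ this] dpos show ?thesis by auto
      qed
      then obtain y where y: "\<And>kk. kk \<in> {1..j} \<Longrightarrow> x kk - \<delta> < y kk \<and> y kk < x kk + \<delta> \<and> poly (P t) (y kk) = 0"
        by metis
      have dec: "y b < y a" if "1 \<le> a" "a < b" "b \<le> j" for a b
      proof -
        have "c \<le> x a - x b" using sep[of a b] that j by auto
        moreover have "y b < x b + \<delta>" "x a - \<delta> < y a" using y[of a] y[of b] that by auto
        ultimately show ?thesis using dsm by linarith
      qed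
      have Pnz: "P t \<noteq> 0" using mP[of t] unfolding is_monic_OP_def by auto
      have dP: "degree (P t) = j" using mP[of t] unfolding is_monic_OP_def by auto
      have injy: "inj_on y {1..j}"
      proof (rule inj_onI)
        fix a b assume ab: "a \<in> {1..j}" "b \<in> {1..j}" "y a = y b"
        show "a = b"
        proof (rule ccontr)
          assume "a \<noteq> b"
          hence "a < b \<or> b < a" by auto
          thus False using dec[of a b] dec[of b a] ab by auto
        qed
      qed
      have roots: "{z. poly (P t) z = 0} = y ` {1..j}"
      proof (rule card_seteq[symmetric])
        show "finite {z. poly (P t) z = 0}" using Pnz by (rule poly_roots_finite)
        show "y ` {1..j} \<subseteq> {z. poly (P t) z = 0}" using y by auto
        show "card {z. poly (P t) z = 0} \<le> card (y ` {1..j})"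
          using card_poly_roots_bound[OF Pnz] dP card_image[OF injy] by simp
      qed
      have "kth_largest_zero (P t) k = y k"
        unfolding kth_largest_zero_def roots using k dec by (intro rev_sorted_nth) auto
      moreover have "\<bar>y k - x k\<bar> < \<delta>" using y[OF k] by auto
      ultimately show "\<bar>kth_largest_zero (P t) k - x k\<bar> \<le> D * E t" unfolding \<delta>_def by simp
    qed
    have "((\<lambda>t. kth_largest_zero (P t) k - x k) \<longlongrightarrow> 0) at_top"
      by (rule Lim_null_comparison[OF _ DE0]) (use evb in simp)
    hence lim: "((\<lambda>t. kth_largest_zero (P t) k) \<longlongrightarrow> x k) at_top"
      by (rule LIM_zero_cancel)
    have bo: "(\<lambda>t. \<bar>kth_largest_zero (P t) k - x k\<bar>) \<in> O[at_top](\<lambda>t. exp (- c * t))"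
      by (rule bigoI[of _ D]) (use evb in \<open>simp add: E_def\<close>)
    show "((\<lambda>t. kth_largest_zero (monic_OP N (tilted_weight N \<rho> x t) x j) k) \<longlongrightarrow> x k) at_top
     \<and> (\<lambda>t. \<bar>kth_largest_zero (monic_OP N (tilted_weight N \<rho> x t) x j) k - x k\<bar>)
         \<in> O[at_top](\<lambda>t. exp (- c * t))"
      using lim bo unfolding P_def W_def by simp
  qed
qed

end
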